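(* Given an $n$-qubit state $\lvert\psi\rangle$, let $\lvert\phi\rangle$ be a stabilizer state that maximizes the stabilizer fidelity, and let $S^* = \mathrm{Weyl}(\lvert\phi\rangle)$. Let $T \subset S^*$ be a proper subspace of $S^*$. Then \[\sum_{x \in S^* \setminus T}q_\psi(x) \geq \frac{2-\sqrt{3}}{2} F_\mathcal{S}(\lvert\psi\rangle)^4.\]
   Context: For $x=(a,b)\in\mathbb F_2^{2n}$ the Weyl operator is $W_x = i^{a\cdot b}X^{a_1}Z^{b_1}\otimes\cdots\otimes X^{a_n}Z^{b_n}$; $p_\psi(x)=2^{-n}\langle\psi|W_x|\psi\rangle^2$ and $q_\psi(x)=\sum_{y\in\mathbb F_2^{2n}}p_\psi(y)p_\psi(x+y)$ (the distribution produced by Bell difference sampling); $\mathrm{Weyl}(\lvert\phi\rangle)=\{x: W_x\lvert\phi\rangle=\pm\lvert\phi\rangle\}$; $F_\mathcal{S}(\lvert\psi\rangle)=\max_{\lvert\phi\rangle\text{ stabilizer}}\lvert\langle\phi|\psi\rangle\rvert^2$. *)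

theory Defs
  imports Complex_Main
begin

text \<open>Computational basis labels of n qubits: bit strings of length n.
  An n-qubit vector is a function from bit strings to complex numbers; only its
  values on strings of length n matter.\<close>
definition bits :: "nat \<Rightarrow> bool list set" where
  "bits n = {xs. length xs = n}"

definition xorv :: "bool list \<Rightarrow> bool list \<Rightarrow> bool list" where
  "xorv a b = map2 (\<noteq>) a b"

definition dotc :: "bool list \<Rightarrow> bool list \<Rightarrow> nat" where
  "dotc a b = length (filter id (map2 (\<and>) a b))"

definition pts :: "nat \<Rightarrow> (bool list \<times> bool list) set" where
  "pts n = bits n \<times> bits n"

definition padd :: "bool list \<times> bool list \<Rightarrow> bool list \<times> bool list \<Rightarrow> bool list \<times> bool list" where
  "padd x y = (xorv (fst x) (fst y), xorv (snd x) (snd y))"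

text \<open>Weyl operator W_x = i^{a.b} X^a Z^b acting on a vector v:
  W_x |c> = i^{a.b} (-1)^{b.c} |c + a>, hence (W_x v)(d) = i^{a.b} (-1)^{b.(d+a)} v(d+a).\<close>
definition weyl_apply ::
  "bool list \<times> bool list \<Rightarrow> (bool list \<Rightarrow> complex) \<Rightarrow> bool list \<Rightarrow> complex" where
  "weyl_apply x v d =
     \<i> ^ dotc (fst x) (snd x) * (-1) ^ dotc (snd x) (xorv d (fst x)) * v (xorv d (fst x))"

definition inner_n :: "nat \<Rightarrow> (bool list \<Rightarrow> complex) \<Rightarrow> (bool list \<Rightarrow> complex) \<Rightarrow> complex" where
  "inner_n n u v = (\<Sum>d\<in>bits n. cnj (u d) * v d)"

definition unit_state :: "nat \<Rightarrow> (bool list \<Rightarrow> complex) \<Rightarrow> bool" where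
  "unit_state n v \<longleftrightarrow> inner_n n v v = 1"

text \<open>p_psi(x) = 2^{-n} <psi|W_x|psi>^2 (the expectation is real since W_x is Hermitian).\<close>
definition pdist :: "nat \<Rightarrow> (bool list \<Rightarrow> complex) \<Rightarrow> bool list \<times> bool list \<Rightarrow> real" where
  "pdist n psi x = (cmod (inner_n n psi (weyl_apply x psi)))\<^sup>2 / 2 ^ n"

definition qdist :: "nat \<Rightarrow> (bool list \<Rightarrow> complex) \<Rightarrow> bool list \<times> bool list \<Rightarrow> real" where
  "qdist n psi x = (\<Sum>y\<in>pts n. pdist n psi y * pdist n psi (padd x y))"

definition weyl_set :: "nat \<Rightarrow> (bool list \<Rightarrow> complex) \<Rightarrow> (bool list \<times> bool list) set" where
  "weyl_set n phi = {x \<in> pts n. (\<forall>d\<in>bits n. weyl_apply x phi d = phi d)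
                               \<or> (\<forall>d\<in>bits n. weyl_apply x phi d = - phi d)}"

text \<open>Stabilizer state: a unit vector stabilized (up to sign) by 2^n distinct Weyl operators,
  i.e. by a stabilizer group of 2^n Pauli operators.\<close>
definition stabilizer_state :: "nat \<Rightarrow> (bool list \<Rightarrow> complex) \<Rightarrow> bool" where
  "stabilizer_state n phi \<longleftrightarrow> unit_state n phi \<and>
     (\<exists>S. S \<subseteq> pts n \<and> card S = 2 ^ n \<and>
          (\<forall>x\<in>S. (\<forall>d\<in>bits n. weyl_apply x phi d = phi d)
                \<or> (\<forall>d\<in>bits n. weyl_apply x phi d = - phi d)))"

definition stab_fidelity :: "nat \<Rightarrow> (bool list \<Rightarrow> complex) \<Rightarrow> real" where
  "stab_fidelity n psi = Sup {(cmod (inner_n n phi psi))\<^sup>2 | phi. stabilizer_state n phi}"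

definition f2_subspace :: "nat \<Rightarrow> (bool list \<times> bool list) set \<Rightarrow> bool" where
  "f2_subspace n T \<longleftrightarrow> T \<subseteq> pts n \<and> (replicate n False, replicate n False) \<in> T \<and>
     (\<forall>x\<in>T. \<forall>y\<in>T. padd x y \<in> T)"

end

theory Submission
  imports Defs "HOL-Analysis.Convex"
begin

lemma xorv_simps[simp]:
  "xorv [] b = []" "xorv a [] = []" "xorv (x#a) (y#b) = (x \<noteq> y) # xorv a b"
  by (auto simp: xorv_def)

lemma dotc_simps[simp]:
  "dotc [] b = 0" "dotc a [] = 0" "dotc (x#a) (y#b) = of_bool (x \<and> y) + dotc a b"
  by (auto simp: dotc_def)

lemma length_xorv[simp]: "length (xorv a b) = min (length a) (length b)"
  by (simp add: xorv_def)

lemma xorv_comm: "xorv a b = xorv b a"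
  apply (induction a arbitrary: b) apply simp subgoal for x a b by (cases b) auto done

lemma xorv_assoc: "xorv (xorv a b) c = xorv a (xorv b c)"
  apply (induction a arbitrary: b c) apply simp subgoal for x a b c by (cases b; cases c) auto done

lemma xorv_self: "xorv a a = replicate (length a) False"
  by (induction a) auto

lemma xorv_zero: "length b \<ge> length a \<Longrightarrow> xorv a (replicate (length b) False) = a"
  apply (induction a arbitrary: b) apply simp subgoal for x a b by (cases b) auto done

lemma xorv_cancel: "length a \<le> length b \<Longrightarrow> xorv (xorv a b) b = a"
  by (simp add: xorv_assoc xorv_self xorv_zero)

lemma xorv_eq_zero: "length a = length b \<Longrightarrow> xorv a b = replicate (length a) False \<longleftrightarrow> a = b"
  apply (induction a arbitrary: b) apply simp subgoal for x a b by (cases b) auto done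

lemma dotc_comm: "dotc a b = dotc b a"
  apply (induction a arbitrary: b) apply simp subgoal for x a b by (cases b) auto done

lemma dotc_xorv_parity: "length c = length e \<Longrightarrow>
   even (dotc b (xorv c e)) \<longleftrightarrow> (even (dotc b c) \<longleftrightarrow> even (dotc b e))"
  apply (induction b arbitrary: c e)
   apply simp
  subgoal for x b c e by (cases c; cases e; auto)
  done

lemma m1pow: "(-1::complex) ^ k = (if even k then 1 else -1)"
  by simp

lemma chi_xorv: "length c = length e \<Longrightarrow>
   (-1::complex) ^ dotc b (xorv c e) = (-1) ^ dotc b c * (-1) ^ dotc b e"
  using dotc_xorv_parity[of c e b] by (auto simp: m1pow)

lemma chi_xorv1: "length c = length e \<Longrightarrow>
   (-1::complex) ^ dotc (xorv c e) b = (-1) ^ dotc c b * (-1) ^ dotc e b"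
  using chi_xorv[of c e b] by (simp add: dotc_comm)

lemma bits_Suc: "bits (Suc n) = Cons True ` bits n \<union> Cons False ` bits n"
  by (auto simp: bits_def length_Suc_conv)

lemma finite_bits[simp]: "finite (bits n)"
proof (induction n)
  case 0 then show ?case by (simp add: bits_def)
next
  case (Suc n) then show ?case by (simp add: bits_Suc)
qed

lemma bits_0: "bits 0 = {[]}" by (auto simp: bits_def)

lemma char_sum: "length c = n \<Longrightarrow>
  (\<Sum>b\<in>bits n. (-1::complex) ^ dotc b c) = (if c = replicate n False then 2 ^ n else 0)"
proof (induction n arbitrary: c)
  case 0 then show ?case by (simp add: bits_0)
next
  case (Suc n)
  then obtain y c' where c: "c = y # c'" "length c' = n" by (auto simp: length_Suc_conv)
  have disj: "Cons True ` bits n \<inter> Cons False ` bits n = {}" by auto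
  have "(\<Sum>b\<in>bits (Suc n). (-1::complex) ^ dotc b c) =
     (\<Sum>b\<in>Cons True ` bits n. (-1::complex) ^ dotc b c) + (\<Sum>b\<in>Cons False ` bits n. (-1::complex) ^ dotc b c)"
    unfolding bits_Suc by (rule sum.union_disjoint) (auto)
  also have "\<dots> = (\<Sum>b\<in>bits n. (-1::complex) ^ (of_bool y + dotc b c')) + (\<Sum>b\<in>bits n. (-1::complex) ^ dotc b c')"
    by (simp add: sum.reindex c)
  also have "\<dots> = (if y then -1 else 1) * (\<Sum>b\<in>bits n. (-1::complex) ^ dotc b c') + (\<Sum>b\<in>bits n. (-1::complex) ^ dotc b c')"
    by (simp add: power_add sum_distrib_left)
  finally show ?case using Suc.IH[OF c(2)] c by auto
qed


lemma xorv_bits: "d \<in> bits n \<Longrightarrow> a \<in> bits n \<Longrightarrow> xorv d a \<in> bits n"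
  by (simp add: bits_def)

lemma sum_xorv_shift: "a \<in> bits n \<Longrightarrow> (\<Sum>d\<in>bits n. F (xorv d a)) = (\<Sum>d\<in>bits n. F d)"
  by (rule sum.reindex_bij_witness[where i="\<lambda>d. xorv d a" and j="\<lambda>d. xorv d a"])
     (auto simp: bits_def xorv_cancel)

definition omega :: "bool list \<times> bool list \<Rightarrow> bool list \<times> bool list \<Rightarrow> nat" where
  "omega x y = dotc (snd x) (fst y) + dotc (snd y) (fst x)"

definition cc :: "bool list \<times> bool list \<Rightarrow> bool list \<times> bool list \<Rightarrow> complex" where
  "cc x y = \<i> ^ dotc (fst x) (snd x) * \<i> ^ dotc (fst y) (snd y) * (-1) ^ dotc (snd x) (fst y)
     * (- \<i>) ^ dotc (xorv (fst x) (fst y)) (xorv (snd x) (snd y))"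

lemma pts_iff: "x \<in> pts n \<longleftrightarrow> fst x \<in> bits n \<and> snd x \<in> bits n"
  by (cases x) (auto simp: pts_def)

lemma ii_pow: "(- \<i>) ^ k * \<i> ^ k = 1"
  by (simp add: power_mult_distrib[symmetric])

lemma m1sq: "((-1::complex) ^ k) * (-1) ^ k = 1"
  by (simp add: power_mult_distrib[symmetric])

lemma weyl_mult:
  assumes x: "x \<in> pts n" and y: "y \<in> pts n" and d: "d \<in> bits n"
  shows "weyl_apply x (weyl_apply y v) d = cc x y * weyl_apply (padd x y) v d"
proof -
  obtain a b where xab: "x = (a,b)" by (cases x)
  obtain a' b' where yab: "y = (a',b')" by (cases y)
  have L: "length a = n" "length b = n" "length a' = n" "length b' = n" "length d = n"
    using x y d by (auto simp: xab yab pts_def bits_def)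
  define D where "D = xorv d (xorv a a')"
  have D1: "xorv (xorv d a) a' = D" by (simp add: D_def xorv_assoc)
  have D2: "xorv D a' = xorv d a" using L by (simp add: D_def xorv_assoc[symmetric] xorv_cancel)
  have c1: "(-1::complex) ^ dotc b (xorv d a) = (-1) ^ dotc b D * (-1) ^ dotc b a'"
    using chi_xorv[of D a' b] L D2 by (simp add: D_def mult.assoc m1sq)
  have c2: "(-1::complex) ^ dotc (xorv b b') D = (-1) ^ dotc b D * (-1) ^ dotc b' D"
    using chi_xorv1[of b b' D] L by simp
  show ?thesis
    unfolding weyl_apply_def padd_def xab yab cc_def
    using L
    apply (simp add: D1 c1 flip: D_def)
    apply (simp add: c2)
    using ii_pow[of "dotc (xorv a a') (xorv b b')"]
    by (simp add: algebra_simps)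
qed

lemma i_sq_pow: "(\<i> ^ k)\<^sup>2 = (-1::complex) ^ k"
  by (simp add: power_mult[symmetric] mult.commute[of k] power_mult)

lemma mi_sq_pow: "((-\<i>) ^ k)\<^sup>2 = (-1::complex) ^ k"
  by (simp add: power_mult[symmetric] mult.commute[of k] power_mult)

lemma m1_sq_pow: "((-1::complex) ^ k)\<^sup>2 = 1"
  by (simp add: power_mult[symmetric] mult.commute[of k] power_mult)

lemma cc_sq:
  assumes x: "x \<in> pts n" and y: "y \<in> pts n"
  shows "(cc x y)\<^sup>2 = (-1) ^ omega x y"
proof -
  obtain a b where xab: "x = (a,b)" by (cases x)
  obtain a' b' where yab: "y = (a',b')" by (cases y)
  have L: "length a = n" "length b = n" "length a' = n" "length b' = n"
    using x y by (auto simp: xab yab pts_def bits_def)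
  have K: "(-1::complex) ^ dotc (xorv a a') (xorv b b') =
      (-1) ^ dotc a b * (-1) ^ dotc a b' * ((-1) ^ dotc a' b * (-1) ^ dotc a' b')"
    using L by (simp add: chi_xorv1 chi_xorv)
  have "(cc x y)\<^sup>2 = (-1) ^ dotc a b * (-1) ^ dotc a' b' * ((-1::complex) ^ dotc (xorv a a') (xorv b b'))"
    unfolding cc_def xab yab by (simp add: power_mult_distrib i_sq_pow mi_sq_pow m1_sq_pow)
  also have "\<dots> = ((-1) ^ dotc a b)\<^sup>2 * ((-1) ^ dotc a' b')\<^sup>2 * ((-1::complex) ^ dotc a b' * (-1) ^ dotc a' b)"
    unfolding K by (simp add: power2_eq_square algebra_simps)
  also have "\<dots> = (-1) ^ omega x y"
    by (simp add: m1_sq_pow omega_def xab yab dotc_comm[of b' a] dotc_comm[of b a'] power_add)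
  finally show ?thesis .
qed

lemma cc_comm:
  assumes x: "x \<in> pts n" and y: "y \<in> pts n"
  shows "cc x y = (-1) ^ omega x y * cc y x"
proof -
  obtain a b where xab: "x = (a,b)" by (cases x)
  obtain a' b' where yab: "y = (a',b')" by (cases y)
  have e: "(-1::complex) ^ dotc b a' = (-1) ^ (dotc b a' + dotc b' a) * (-1) ^ dotc b' a"
    by (simp add: power_add mult.assoc m1sq)
  show ?thesis unfolding cc_def omega_def xab yab
    by (simp add: e xorv_comm[of a] xorv_comm[of b] algebra_simps)
qed


definition zp :: "nat \<Rightarrow> bool list \<times> bool list" where
  "zp n = (replicate n False, replicate n False)"

lemma dotc_zero1[simp]: "dotc (replicate n False) c = 0"
  apply (induction n arbitrary: c) apply simp subgoal for n c by (cases c) auto done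

lemma dotc_zero2[simp]: "dotc c (replicate n False) = 0"
  by (simp add: dotc_comm[of c])

lemma xorv_zero': "length a \<le> n \<Longrightarrow> xorv a (replicate n False) = a"
  using xorv_zero[of a "replicate n False"] by simp

lemma padd_pts: "x \<in> pts n \<Longrightarrow> y \<in> pts n \<Longrightarrow> padd x y \<in> pts n"
  by (auto simp: pts_def padd_def bits_def)

lemma padd_comm: "padd x y = padd y x"
  by (simp add: padd_def xorv_comm)

lemma padd_assoc: "padd (padd x y) z = padd x (padd y z)"
  by (simp add: padd_def xorv_assoc)

lemma padd_self: "x \<in> pts n \<Longrightarrow> padd x x = zp n"
  by (auto simp: pts_def padd_def bits_def zp_def xorv_self)

lemma padd_zero: "x \<in> pts n \<Longrightarrow> padd x (zp n) = x"
  by (cases x) (auto simp: pts_def padd_def bits_def zp_def xorv_zero)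

lemma padd_cancel: "x \<in> pts n \<Longrightarrow> y \<in> pts n \<Longrightarrow> padd (padd x y) y = x"
  by (simp add: padd_assoc padd_self padd_zero)

lemma zp_pts: "zp n \<in> pts n"
  by (simp add: zp_def pts_def bits_def)

lemma weyl_comm:
  assumes "x \<in> pts n" "y \<in> pts n" "d \<in> bits n"
  shows "weyl_apply x (weyl_apply y v) d = (-1) ^ omega x y * weyl_apply y (weyl_apply x v) d"
  using assms by (simp add: weyl_mult cc_comm[of x n y] padd_comm)

lemma cc_self: "x \<in> pts n \<Longrightarrow> cc x x = 1"
proof -
  assume x: "x \<in> pts n"
  obtain a b where xab: "x = (a,b)" by (cases x)
  have L: "length a = n" "length b = n" using x by (auto simp: xab pts_def bits_def)
  have "cc x x = (\<i> ^ dotc a b)\<^sup>2 * (-1) ^ dotc a b"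
    unfolding cc_def xab using L by (simp add: xorv_self dotc_comm[of b a] power2_eq_square)
  also have "\<dots> = 1" by (simp add: i_sq_pow m1sq)
  finally show ?thesis .
qed

lemma weyl_zero: "d \<in> bits n \<Longrightarrow> weyl_apply (zp n) v d = v d"
  by (simp add: weyl_apply_def zp_def bits_def xorv_zero')

lemma weyl_invol: "x \<in> pts n \<Longrightarrow> d \<in> bits n \<Longrightarrow> weyl_apply x (weyl_apply x v) d = v d"
  by (simp add: weyl_mult cc_self padd_self weyl_zero)

lemma weyl_cong: "x \<in> pts n \<Longrightarrow> d \<in> bits n \<Longrightarrow> (\<And>e. e \<in> bits n \<Longrightarrow> f e = g e) \<Longrightarrow>
   weyl_apply x f d = weyl_apply x g d"
  by (simp add: weyl_apply_def pts_iff xorv_bits)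

lemma weyl_lin: "weyl_apply x (\<lambda>d. \<alpha> * f d + \<beta> * g d) d = \<alpha> * weyl_apply x f d + \<beta> * weyl_apply x g d"
  by (simp add: weyl_apply_def algebra_simps)

lemma weyl_scale: "weyl_apply x (\<lambda>d. \<alpha> * f d) d = \<alpha> * weyl_apply x f d"
  by (simp add: weyl_apply_def algebra_simps)

lemma inner_cong: "(\<And>e. e \<in> bits n \<Longrightarrow> f e = f' e) \<Longrightarrow> (\<And>e. e \<in> bits n \<Longrightarrow> g e = g' e) \<Longrightarrow>
   inner_n n f g = inner_n n f' g'"
  by (simp add: inner_n_def)

lemma inner_conj: "cnj (inner_n n f g) = inner_n n g f"
  by (simp add: inner_n_def mult.commute)

lemma inner_lin_r: "inner_n n f (\<lambda>d. \<alpha> * g d + \<beta> * h d) = \<alpha> * inner_n n f g + \<beta> * inner_n n f h"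
  by (simp add: inner_n_def algebra_simps sum.distrib sum_distrib_left)

lemma inner_lin_l: "inner_n n (\<lambda>d. \<alpha> * g d + \<beta> * h d) f = cnj \<alpha> * inner_n n g f + cnj \<beta> * inner_n n h f"
  by (simp add: inner_n_def algebra_simps sum.distrib sum_distrib_left)

lemma inner_scale_r: "inner_n n f (\<lambda>d. \<alpha> * g d) = \<alpha> * inner_n n f g"
  by (simp add: inner_n_def algebra_simps sum_distrib_left)

lemma inner_scale_l: "inner_n n (\<lambda>d. \<alpha> * g d) f = cnj \<alpha> * inner_n n g f"
  by (simp add: inner_n_def algebra_simps sum_distrib_left)

lemma hermitian:
  assumes x: "x \<in> pts n"
  shows "inner_n n f (weyl_apply x g) = inner_n n (weyl_apply x f) g"
proof -
  obtain a b where xab: "x = (a,b)" by (cases x)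
  have a: "a \<in> bits n" and b: "b \<in> bits n" using x by (auto simp: xab pts_def)
  have "inner_n n f (weyl_apply x g) =
     (\<Sum>d\<in>bits n. cnj (f d) * (\<i> ^ dotc a b * (-1) ^ dotc b (xorv d a) * g (xorv d a)))"
    by (simp add: inner_n_def weyl_apply_def xab)
  also have "\<dots> = (\<Sum>d\<in>bits n. cnj (f (xorv d a)) * (\<i> ^ dotc a b * (-1) ^ dotc b d * g d))"
  proof -
    have "(\<Sum>d\<in>bits n. cnj (f d) * (\<i> ^ dotc a b * (-1) ^ dotc b (xorv d a) * g (xorv d a)))
      = (\<Sum>d\<in>bits n. cnj (f (xorv (xorv d a) a)) * (\<i> ^ dotc a b * (-1) ^ dotc b (xorv d a) * g (xorv d a)))"
      using a by (intro sum.cong) (auto simp: xorv_cancel bits_def)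
    also have "\<dots> = (\<Sum>d\<in>bits n. cnj (f (xorv d a)) * (\<i> ^ dotc a b * (-1) ^ dotc b d * g d))"
      by (rule sum_xorv_shift[OF a])
    finally show ?thesis .
  qed
  also have "\<dots> = (\<Sum>d\<in>bits n. cnj (\<i> ^ dotc a b * (-1) ^ dotc b (xorv d a) * f (xorv d a)) * g d)"
  proof (rule sum.cong[OF refl])
    fix d assume d: "d \<in> bits n"
    have "(-1::complex) ^ dotc b (xorv d a) = (-1) ^ dotc b d * (-1) ^ dotc a b"
      using d a by (simp add: chi_xorv bits_def dotc_comm[of b a])
    moreover have "cnj (\<i> ^ k) * (-1) ^ k = \<i> ^ k" for k
      by (simp add: power_mult_distrib[symmetric])
    ultimately show "cnj (f (xorv d a)) * (\<i> ^ dotc a b * (-1) ^ dotc b d * g d) =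
          cnj (\<i> ^ dotc a b * (-1) ^ dotc b (xorv d a) * f (xorv d a)) * g d"
      by (simp add: algebra_simps)
  qed
  also have "\<dots> = inner_n n (weyl_apply x f) g"
    by (simp add: inner_n_def weyl_apply_def xab)
  finally show ?thesis .
qed

lemma unitary: "x \<in> pts n \<Longrightarrow> inner_n n (weyl_apply x f) (weyl_apply x g) = inner_n n f g"
proof -
  assume x: "x \<in> pts n"
  have "inner_n n (weyl_apply x f) (weyl_apply x g) = inner_n n f (weyl_apply x (weyl_apply x g))"
    using hermitian[OF x, of f "weyl_apply x g"] by simp
  also have "\<dots> = inner_n n f g"
    by (rule inner_cong) (auto simp: weyl_invol[OF x])
  finally show ?thesis .
qed

lemma herm_real: "x \<in> pts n \<Longrightarrow> cnj (inner_n n f (weyl_apply x f)) = inner_n n f (weyl_apply x f)"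
  by (simp add: inner_conj hermitian)


lemma xorv_dd: "length d = length e \<Longrightarrow> xorv d (xorv d e) = e"
  by (simp add: xorv_assoc[symmetric] xorv_self xorv_comm[of "replicate _ False"] xorv_zero')

lemma xorv_ed: "length d = length e \<Longrightarrow> xorv e (xorv d e) = d"
  by (simp add: xorv_comm[of d e] xorv_dd)

lemma phase_swap:
  assumes "a \<in> bits n" "b \<in> bits n" "d \<in> bits n" "e \<in> bits n"
  shows "(\<i> ^ dotc a b * (-1) ^ dotc b (xorv d a)) * (\<i> ^ dotc a b * (-1) ^ dotc b (xorv e a))
     = (-1::complex) ^ dotc b (xorv (xorv d e) a)"
proof -
  have L: "length a = n" "length b = n" "length d = n" "length e = n" using assms by (auto simp: bits_def)
  have "(\<i> ^ dotc a b * (-1) ^ dotc b (xorv d a)) * (\<i> ^ dotc a b * (-1) ^ dotc b (xorv e a))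
     = (\<i> ^ dotc a b)\<^sup>2 * ((-1::complex) ^ dotc b a)\<^sup>2 * ((-1) ^ dotc b d * (-1) ^ dotc b e)"
    using L by (simp add: chi_xorv power2_eq_square algebra_simps)
  also have "\<dots> = (-1::complex) ^ dotc b (xorv (xorv d e) a)"
    using L by (simp add: i_sq_pow m1_sq_pow chi_xorv dotc_comm[of a b])
  finally show ?thesis .
qed

lemma swap_identity:
  "(\<Sum>x\<in>pts n. inner_n n f (weyl_apply x g) * inner_n n h (weyl_apply x k))
     = 2 ^ n * inner_n n f k * inner_n n h g"
proof -
  define G where "G a d e = cnj (f d) * g (xorv d a) * (cnj (h e) * k (xorv e a))" for a d e
  define B where "B = bits n"
  have cp: "\<And>F. (\<Sum>x\<in>B\<times>B. F x) = (\<Sum>a\<in>B. \<Sum>b\<in>B. F (a,b))"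
    by (simp add: sum.cartesian_product)
  have "(\<Sum>x\<in>pts n. inner_n n f (weyl_apply x g) * inner_n n h (weyl_apply x k))
     = (\<Sum>a\<in>B. \<Sum>b\<in>B. \<Sum>d\<in>B. \<Sum>e\<in>B. G a d e * (-1) ^ dotc b (xorv (xorv d e) a))"
    unfolding pts_def B_def[symmetric] cp
  proof (intro sum.cong refl)
    fix a b assume a: "a \<in> B" and b: "b \<in> B"
    note a = a[unfolded B_def] and b = b[unfolded B_def]
    show "inner_n n f (weyl_apply (a, b) g) * inner_n n h (weyl_apply (a, b) k) =
         (\<Sum>d\<in>B. \<Sum>e\<in>B. G a d e * (-1) ^ dotc b (xorv (xorv d e) a))"
      unfolding inner_n_def sum_product B_def
    proof (intro sum.cong refl)
      fix d e assume d: "d \<in> bits n" and e: "e \<in> bits n"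
      show "cnj (f d) * weyl_apply (a, b) g d * (cnj (h e) * weyl_apply (a, b) k e) =
         G a d e * (-1) ^ dotc b (xorv (xorv d e) a)"
        unfolding weyl_apply_def G_def phase_swap[OF a b d e, symmetric]
        by (simp add: algebra_simps)
    qed
  qed
  also have "\<dots> = (\<Sum>a\<in>B. \<Sum>d\<in>B. \<Sum>e\<in>B. G a d e * (\<Sum>b\<in>B. (-1) ^ dotc b (xorv (xorv d e) a)))"
    apply (rule sum.cong[OF refl])
    apply (rule trans[OF sum.swap])
    apply (rule sum.cong[OF refl])
    apply (rule trans[OF sum.swap])
    by (simp add: sum_distrib_left)
  also have "\<dots> = (\<Sum>a\<in>B. \<Sum>d\<in>B. \<Sum>e\<in>B. if a = xorv d e then 2 ^ n * G a d e else 0)"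
  proof (intro sum.cong refl)
    fix a d e assume "a \<in> B" "d \<in> B" "e \<in> B"
    then have L: "length a = n" "length d = n" "length e = n" by (auto simp: B_def bits_def)
    show "G a d e * (\<Sum>b\<in>B. (-1) ^ dotc b (xorv (xorv d e) a)) = (if a = xorv d e then 2 ^ n * G a d e else 0)"
    proof -
      have "(\<Sum>b\<in>B. (-1::complex) ^ dotc b (xorv (xorv d e) a)) = (if xorv (xorv d e) a = replicate n False then 2 ^ n else 0)"
        unfolding B_def using L by (intro char_sum) simp
      moreover have "xorv (xorv d e) a = replicate n False \<longleftrightarrow> a = xorv d e"
        using xorv_eq_zero[of "xorv d e" a] L by auto
      ultimately show ?thesis by simp
    qed
  qed
  also have "\<dots> = (\<Sum>d\<in>B. \<Sum>e\<in>B. \<Sum>a\<in>B. if a = xorv d e then 2 ^ n * G a d e else 0)"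
    apply (rule trans[OF sum.swap])
    apply (rule sum.cong[OF refl])
    by (rule sum.swap)
  also have "\<dots> = (\<Sum>d\<in>B. \<Sum>e\<in>B. 2 ^ n * (cnj (f d) * k d) * (cnj (h e) * g e))"
  proof (intro sum.cong refl)
    fix d e assume "d \<in> B" "e \<in> B"
    then have L: "length d = n" "length e = n" and de: "xorv d e \<in> B" by (auto simp: B_def bits_def)
    show "(\<Sum>a\<in>B. if a = xorv d e then 2 ^ n * G a d e else 0) = 2 ^ n * (cnj (f d) * k d) * (cnj (h e) * g e)"
      using de L by (simp add: B_def sum.delta' G_def xorv_dd xorv_ed algebra_simps)
  qed
  also have "\<dots> = 2 ^ n * inner_n n f k * inner_n n h g"
    unfolding inner_n_def B_def sum_product by (simp add: sum_distrib_left algebra_simps)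
  finally show ?thesis .
qed


definition stab :: "nat \<Rightarrow> (bool list \<Rightarrow> complex) \<Rightarrow> bool list \<times> bool list \<Rightarrow> complex \<Rightarrow> bool" where
  "stab n v x l \<longleftrightarrow> (\<forall>d\<in>bits n. weyl_apply x v d = l * v d)"

definition ee :: "nat \<Rightarrow> (bool list \<Rightarrow> complex) \<Rightarrow> bool list \<times> bool list \<Rightarrow> complex" where
  "ee n v x = inner_n n v (weyl_apply x v)"

lemma weyl_set_iff: "x \<in> weyl_set n v \<longleftrightarrow> x \<in> pts n \<and> (stab n v x 1 \<or> stab n v x (-1))"
  by (simp add: weyl_set_def stab_def)

lemma weyl_set_sub: "weyl_set n v \<subseteq> pts n"
  by (auto simp: weyl_set_def)

lemma finite_pts[simp]: "finite (pts n)"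
  by (simp add: pts_def)

lemma finite_weyl_set[simp]: "finite (weyl_set n v)"
  by (rule finite_subset[OF weyl_set_sub finite_pts])

lemma cc_pm1: "x \<in> pts n \<Longrightarrow> y \<in> pts n \<Longrightarrow> even (omega x y) \<Longrightarrow> cc x y = 1 \<or> cc x y = -1"
  using cc_sq[of x n y] power2_eq_1_iff[of "cc x y"] by simp

lemma stab_comp:
  assumes x: "x \<in> pts n" and y: "y \<in> pts n" and sx: "stab n v x l" and sy: "stab n v y m"
    and d: "d \<in> bits n"
  shows "weyl_apply x (weyl_apply y v) d = l * m * v d"
proof -
  have "weyl_apply x (weyl_apply y v) d = weyl_apply x (\<lambda>e. m * v e) d"
    using sy by (intro weyl_cong[OF x d]) (auto simp: stab_def)
  also have "\<dots> = l * m * v d" using sx d by (simp add: weyl_scale stab_def)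
  finally show ?thesis .
qed

lemma stab_mult:
  assumes x: "x \<in> pts n" and y: "y \<in> pts n" and sx: "stab n v x l" and sy: "stab n v y m"
    and ev: "even (omega x y)"
  shows "stab n v (padd x y) (l * m * cc x y)"
  unfolding stab_def
proof
  fix d assume d: "d \<in> bits n"
  have c: "cc x y = 1 \<or> cc x y = -1" by (rule cc_pm1[OF x y ev])
  have "cc x y * weyl_apply (padd x y) v d = l * m * v d"
    using weyl_mult[OF x y d] stab_comp[OF x y sx sy d] by simp
  then show "weyl_apply (padd x y) v d = l * m * cc x y * v d"
    using c by (elim disjE) (simp_all add: algebra_simps minus_equation_iff[of "weyl_apply _ _ _"])
qed

lemma stab_isotropic:
  assumes x: "x \<in> pts n" and y: "y \<in> pts n" and sx: "stab n v x l" and sy: "stab n v y m"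
    and d: "d \<in> bits n" and nz: "v d \<noteq> 0" "l \<noteq> 0" "m \<noteq> 0"
  shows "even (omega x y)"
proof (rule ccontr)
  assume "odd (omega x y)"
  then have "weyl_apply x (weyl_apply y v) d = - weyl_apply y (weyl_apply x v) d"
    using weyl_comm[OF x y d, of v] by simp
  then have "l * m * v d = - (m * l * v d)"
    using stab_comp[OF x y sx sy d] stab_comp[OF y x sy sx d] by simp
  then show False using nz by simp
qed

lemma ws_closed:
  assumes x: "x \<in> weyl_set n v" and y: "y \<in> weyl_set n v" and d: "d \<in> bits n" and nz: "v d \<noteq> 0"
  shows "padd x y \<in> weyl_set n v" and "even (omega x y)"
proof -
  obtain l where l: "l = 1 \<or> l = -1" "stab n v x l" and xp: "x \<in> pts n" using x by (auto simp: weyl_set_iff)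
  obtain m where m: "m = 1 \<or> m = -1" "stab n v y m" and yp: "y \<in> pts n" using y by (auto simp: weyl_set_iff)
  show ev: "even (omega x y)" using stab_isotropic[OF xp yp l(2) m(2) d nz] l(1) m(1) by auto
  have s: "stab n v (padd x y) (l * m * cc x y)" by (rule stab_mult[OF xp yp l(2) m(2) ev])
  have "l * m * cc x y = 1 \<or> l * m * cc x y = -1" using l(1) m(1) cc_pm1[OF xp yp ev] by auto
  then show "padd x y \<in> weyl_set n v" using s padd_pts[OF xp yp] by (auto simp: weyl_set_iff)
qed


lemma zcnj: "z * cnj z = complex_of_real ((cmod z)\<^sup>2)"
  using complex_norm_square[of z] by simp

lemma stab_ee: "stab n v x l \<Longrightarrow> unit_state n v \<Longrightarrow> ee n v x = l"
proof -
  assume s: "stab n v x l" and u: "unit_state n v"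
  have "ee n v x = inner_n n v (\<lambda>d. l * v d)"
    unfolding ee_def using s by (intro inner_cong) (auto simp: stab_def)
  also have "\<dots> = l" using u by (simp add: inner_scale_r unit_state_def)
  finally show ?thesis .
qed

lemma unit_nz: "unit_state n v \<Longrightarrow> \<exists>d\<in>bits n. v d \<noteq> 0"
  by (rule ccontr) (auto simp: unit_state_def inner_n_def)

lemma stab_key:
  assumes st: "stabilizer_state n phi"
  shows "card (weyl_set n phi) = 2 ^ n" and "\<And>x. x \<in> pts n - weyl_set n phi \<Longrightarrow> ee n phi x = 0"
proof -
  define S where "S = weyl_set n phi"
  have u: "unit_state n phi" using st by (simp add: stabilizer_state_def)
  obtain S0 where S0: "S0 \<subseteq> pts n" "card S0 = 2 ^ n"
    "\<forall>x\<in>S0. (\<forall>d\<in>bits n. weyl_apply x phi d = phi d) \<or> (\<forall>d\<in>bits n. weyl_apply x phi d = - phi d)"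
    using st by (auto simp: stabilizer_state_def)
  have "S0 \<subseteq> S" using S0 by (auto simp: S_def weyl_set_def)
  then have cS: "card S \<ge> 2 ^ n" using S0(2) card_mono[of S S0] by (simp add: S_def)
  have SP: "S \<subseteq> pts n" by (simp add: S_def weyl_set_sub)
  have real: "complex_of_real ((cmod (ee n phi x))\<^sup>2) = ee n phi x * ee n phi x" if "x \<in> pts n" for x
    using herm_real[OF that, of phi] zcnj[of "ee n phi x"] by (simp add: ee_def)
  have "(\<Sum>x\<in>pts n. ee n phi x * ee n phi x) = 2 ^ n"
    using swap_identity[of n phi phi phi phi] u by (simp add: ee_def unit_state_def)
  moreover have "complex_of_real (\<Sum>x\<in>pts n. (cmod (ee n phi x))\<^sup>2) = (\<Sum>x\<in>pts n. ee n phi x * ee n phi x)"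
    unfolding of_real_sum by (rule sum.cong[OF refl real])
  ultimately have "complex_of_real (\<Sum>x\<in>pts n. (cmod (ee n phi x))\<^sup>2) = 2 ^ n" by simp
  then have "complex_of_real (\<Sum>x\<in>pts n. (cmod (ee n phi x))\<^sup>2) = complex_of_real (2 ^ n)"
    by (simp only: of_real_power of_real_numeral)
  then have tot: "(\<Sum>x\<in>pts n. (cmod (ee n phi x))\<^sup>2) = 2 ^ n"
    by (simp only: of_real_eq_iff)
  have one: "(cmod (ee n phi x))\<^sup>2 = 1" if "x \<in> S" for x
  proof -
    from that obtain l where "l = 1 \<or> l = -1" "stab n phi x l" by (auto simp: S_def weyl_set_iff)
    then show ?thesis using stab_ee[of n phi x l] u by auto
  qed
  have "(\<Sum>x\<in>pts n. (cmod (ee n phi x))\<^sup>2) = (\<Sum>x\<in>S. (cmod (ee n phi x))\<^sup>2) + (\<Sum>x\<in>pts n - S. (cmod (ee n phi x))\<^sup>2)"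
    using sum.subset_diff[OF SP finite_pts, of "\<lambda>x. (cmod (ee n phi x))\<^sup>2"] by simp
  also have "(\<Sum>x\<in>S. (cmod (ee n phi x))\<^sup>2) = card S" using one by simp
  finally have eq: "real (card S) + (\<Sum>x\<in>pts n - S. (cmod (ee n phi x))\<^sup>2) = 2 ^ n" using tot by simp
  have nn: "(\<Sum>x\<in>pts n - S. (cmod (ee n phi x))\<^sup>2) \<ge> 0" by (simp add: sum_nonneg)
  have "real (2 ^ n) \<le> real (card S)" using cS by (simp only: of_nat_le_iff)
  then have "real (card S) \<ge> 2 ^ n" by simp
  then have z: "(\<Sum>x\<in>pts n - S. (cmod (ee n phi x))\<^sup>2) = 0" using eq nn by linarith
  then have "real (card S) = 2 ^ n" using eq by simp
  then have "real (card S) = real (2 ^ n)" by simp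
  then show "card (weyl_set n phi) = 2 ^ n" unfolding S_def by (simp only: of_nat_eq_iff)
  fix x assume x: "x \<in> pts n - weyl_set n phi"
  have "\<forall>x\<in>pts n - S. (cmod (ee n phi x))\<^sup>2 = 0"
    using z sum_nonneg_eq_0_iff[of "pts n - S" "\<lambda>x. (cmod (ee n phi x))\<^sup>2"] by simp
  then show "ee n phi x = 0" using x by (auto simp: S_def)
qed

lemma fid_identity:
  assumes st: "stabilizer_state n phi"
  shows "(\<Sum>x\<in>weyl_set n phi. ee n phi x * ee n psi x) = 2 ^ n * complex_of_real ((cmod (inner_n n phi psi))\<^sup>2)"
proof -
  have "(\<Sum>x\<in>pts n. ee n phi x * ee n psi x) = 2 ^ n * complex_of_real ((cmod (inner_n n phi psi))\<^sup>2)"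
    using swap_identity[of n phi phi psi psi]
    by (simp add: ee_def zcnj inner_conj[of n phi psi, symmetric] mult.assoc)
  moreover have "(\<Sum>x\<in>pts n. ee n phi x * ee n psi x) = (\<Sum>x\<in>weyl_set n phi. ee n phi x * ee n psi x)"
    using stab_key(2)[OF st] weyl_set_sub by (intro sum.mono_neutral_right) auto
  ultimately show ?thesis by simp
qed


definition perp :: "nat \<Rightarrow> (bool list \<times> bool list) set \<Rightarrow> (bool list \<times> bool list) set" where
  "perp n G = {w\<in>pts n. \<forall>t\<in>G. even (omega w t)}"

lemma omega_comm: "omega x y = omega y x"
  by (simp add: omega_def)

lemma chi_omega_padd:
  assumes "x \<in> pts n" "y \<in> pts n" "z \<in> pts n"
  shows "(-1::complex) ^ omega (padd x y) z = (-1) ^ omega x z * (-1) ^ omega y z"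
proof -
  obtain a b where x: "x = (a,b)" by (cases x)
  obtain a' b' where y: "y = (a',b')" by (cases y)
  obtain a'' b'' where z: "z = (a'',b'')" by (cases z)
  have L: "length a = n" "length b = n" "length a' = n" "length b' = n"
    using assms by (auto simp: x y z pts_def bits_def)
  show ?thesis using L
    by (simp add: omega_def x y z padd_def power_add chi_xorv chi_xorv1 algebra_simps)
qed

lemma even_omega_padd:
  assumes "x \<in> pts n" "y \<in> pts n" "z \<in> pts n"
  shows "even (omega (padd x y) z) \<longleftrightarrow> (even (omega x z) \<longleftrightarrow> even (omega y z))"
  using chi_omega_padd[OF assms] by (auto simp: m1pow split: if_splits)

lemma even_omega_padd2:
  assumes "x \<in> pts n" "y \<in> pts n" "z \<in> pts n"
  shows "even (omega z (padd x y)) \<longleftrightarrow> (even (omega z x) \<longleftrightarrow> even (omega z y))"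
  using even_omega_padd[OF assms] by (simp add: omega_comm)

lemma char_pts:
  assumes t: "t \<in> pts n"
  shows "(\<Sum>w\<in>pts n. (-1::complex) ^ omega w t) = (if t = zp n then 2 ^ n * 2 ^ n else 0)"
proof -
  obtain a' b' where tt: "t = (a',b')" by (cases t)
  have L: "length a' = n" "length b' = n" using t by (auto simp: tt pts_def bits_def)
  have "(\<Sum>w\<in>pts n. (-1::complex) ^ omega w t) = (\<Sum>a\<in>bits n. \<Sum>b\<in>bits n. (-1::complex) ^ dotc a b' * (-1) ^ dotc b a')"
    unfolding pts_def sum.cartesian_product
    by (intro sum.cong refl) (auto simp: omega_def tt power_add dotc_comm[of b' ])
  also have "\<dots> = (\<Sum>a\<in>bits n. (-1::complex) ^ dotc a b') * (\<Sum>b\<in>bits n. (-1) ^ dotc b a')"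
    by (simp add: sum_product)
  also have "\<dots> = (if t = zp n then 2 ^ n * 2 ^ n else 0)"
    using L by (simp add: char_sum tt zp_def)
  finally show ?thesis .
qed

lemma sub_pts: "f2_subspace n G \<Longrightarrow> G \<subseteq> pts n"
  by (simp add: f2_subspace_def)

lemma finite_sub: "f2_subspace n G \<Longrightarrow> finite G"
  using sub_pts finite_subset finite_pts by metis

lemma char_sub:
  assumes G: "f2_subspace n G" and w: "w \<in> pts n"
  shows "(\<Sum>t\<in>G. (-1::complex) ^ omega w t) = (if w \<in> perp n G then of_nat (card G) else 0)"
proof (cases "w \<in> perp n G")
  case True
  then show ?thesis by (simp add: perp_def)
next
  case False
  then obtain t0 where t0: "t0 \<in> G" "odd (omega w t0)" using w by (auto simp: perp_def)
  have GP: "G \<subseteq> pts n" using G by (simp add: f2_subspace_def)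
  have cl: "padd t t0 \<in> G" if "t \<in> G" for t using G that t0 by (simp add: f2_subspace_def)
  have pc: "padd (padd t t0) t0 = t" if "t \<in> G" for t
    using GP t0 that by (intro padd_cancel) auto
  have "(\<Sum>t\<in>G. (-1::complex) ^ omega w t) = (\<Sum>t\<in>G. (-1::complex) ^ omega w (padd t t0))"
    by (rule sum.reindex_bij_witness[where i="\<lambda>t. padd t t0" and j="\<lambda>t. padd t t0"])
       (use cl pc in auto)
  also have "\<dots> = (\<Sum>t\<in>G. - ((-1::complex) ^ omega w t))"
  proof (rule sum.cong[OF refl])
    fix t assume "t \<in> G"
    then have "t \<in> pts n" "t0 \<in> pts n" using GP t0 by auto
    then show "(-1::complex) ^ omega w (padd t t0) = - ((-1) ^ omega w t)"
      using chi_omega_padd[of t n t0 w] w t0(2) by (simp add: omega_comm)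
  qed
  finally have "(\<Sum>t\<in>G. (-1::complex) ^ omega w t) = 0" by (simp add: sum_negf)
  then show ?thesis using False by simp
qed

lemma perp_count:
  assumes G: "f2_subspace n G"
  shows "card G * card (perp n G) = 2 ^ n * 2 ^ n"
proof -
  have GP: "G \<subseteq> pts n" using G by (simp add: f2_subspace_def)
  have z: "zp n \<in> G" using G by (simp add: f2_subspace_def zp_def)
  have fG: "finite G" by (rule finite_sub[OF G])
  have "(\<Sum>w\<in>pts n. \<Sum>t\<in>G. (-1::complex) ^ omega w t) = (\<Sum>w\<in>pts n. if w \<in> perp n G then of_nat (card G) else 0)"
    by (intro sum.cong refl) (simp add: char_sub[OF G])
  also have "\<dots> = of_nat (card G) * of_nat (card (perp n G))"
    by (simp add: sum.If_cases perp_def Int_absorb1[of "{w \<in> pts n. _}"] Int_def)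
  finally have A: "(\<Sum>w\<in>pts n. \<Sum>t\<in>G. (-1::complex) ^ omega w t) = of_nat (card G) * of_nat (card (perp n G))" .
  have "(\<Sum>w\<in>pts n. \<Sum>t\<in>G. (-1::complex) ^ omega w t) = (\<Sum>t\<in>G. \<Sum>w\<in>pts n. (-1::complex) ^ omega w t)"
    by (rule sum.swap)
  also have "\<dots> = (\<Sum>t\<in>G. if t = zp n then 2 ^ n * 2 ^ n else 0)"
    using GP by (intro sum.cong refl) (auto simp: char_pts)
  also have "\<dots> = 2 ^ n * 2 ^ n" using z fG by (simp add: sum.delta)
  finally have "complex_of_nat (card G * card (perp n G)) = of_nat (2 ^ n * 2 ^ n)" using A by simp
  then show ?thesis by (simp only: of_nat_eq_iff)
qed


lemma stab_transport:
  assumes x: "x \<in> pts n" and w: "w \<in> pts n" and s: "stab n v x l"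
  shows "stab n (weyl_apply w v) x ((-1) ^ omega x w * l)"
  unfolding stab_def
proof
  fix d assume d: "d \<in> bits n"
  have "weyl_apply x (weyl_apply w v) d = (-1) ^ omega x w * weyl_apply w (weyl_apply x v) d"
    by (rule weyl_comm[OF x w d])
  also have "weyl_apply w (weyl_apply x v) d = weyl_apply w (\<lambda>e. l * v e) d"
    using s by (intro weyl_cong[OF w d]) (auto simp: stab_def)
  finally show "weyl_apply x (weyl_apply w v) d = (-1) ^ omega x w * l * weyl_apply w v d"
    by (simp add: weyl_scale)
qed

lemma mk_stab:
  assumes "unit_state n v" "S \<subseteq> weyl_set n v" "card S = 2 ^ n"
  shows "stabilizer_state n v"
  unfolding stabilizer_state_def
  using assms weyl_set_sub[of n v] by (intro conjI exI[of _ S]) (auto simp: weyl_set_def)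

lemma ws_stab: "x \<in> weyl_set n v \<Longrightarrow> \<exists>l. (l = 1 \<or> l = -1) \<and> stab n v x l"
  by (auto simp: weyl_set_iff)

lemma stab_ws: "x \<in> pts n \<Longrightarrow> stab n v x l \<Longrightarrow> l = 1 \<or> l = -1 \<Longrightarrow> x \<in> weyl_set n v"
  by (auto simp: weyl_set_iff)

lemma ws_iso:
  assumes "stabilizer_state n phi" "x \<in> weyl_set n phi" "y \<in> weyl_set n phi"
  shows "even (omega x y)" and "padd x y \<in> weyl_set n phi"
proof -
  have "unit_state n phi" using assms(1) by (simp add: stabilizer_state_def)
  then obtain d where "d \<in> bits n" "phi d \<noteq> 0" using unit_nz by blast
  then show "even (omega x y)" "padd x y \<in> weyl_set n phi" using ws_closed assms(2,3) by auto
qed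

lemma ws_subspace:
  assumes "stabilizer_state n phi"
  shows "f2_subspace n (weyl_set n phi)"
proof -
  have "stab n phi (zp n) 1" by (simp add: stab_def weyl_zero)
  then have "zp n \<in> weyl_set n phi" using zp_pts stab_ws by blast
  then show ?thesis using ws_iso[OF assms] weyl_set_sub
    by (auto simp: f2_subspace_def zp_def)
qed

lemma m1_cases: "(-1::complex) ^ k = 1 \<or> (-1::complex) ^ k = -1"
  by (simp add: m1pow)

lemma inner_le1:
  assumes "unit_state n a" "unit_state n b"
  shows "cmod (inner_n n a b) \<le> 1"
proof -
  have sq: "(\<Sum>d\<in>bits n. (cmod (v d))\<^sup>2) = 1" if "unit_state n v" for v
  proof -
    have "complex_of_real (\<Sum>d\<in>bits n. (cmod (v d))\<^sup>2) = (\<Sum>d\<in>bits n. cnj (v d) * v d)"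
      unfolding of_real_sum by (intro sum.cong refl) (subst zcnj[symmetric], simp add: mult.commute)
    also have "\<dots> = 1" using that by (simp add: unit_state_def inner_n_def)
    finally show ?thesis by (simp only: of_real_eq_1_iff)
  qed
  have "cmod (inner_n n a b) \<le> (\<Sum>d\<in>bits n. cmod (cnj (a d) * b d))"
    unfolding inner_n_def by (rule norm_sum)
  also have "\<dots> \<le> (\<Sum>d\<in>bits n. ((cmod (a d))\<^sup>2 + (cmod (b d))\<^sup>2) / 2)"
  proof (rule sum_mono)
    fix d
    have "0 \<le> (cmod (a d) - cmod (b d))\<^sup>2" by simp
    then show "cmod (cnj (a d) * b d) \<le> ((cmod (a d))\<^sup>2 + (cmod (b d))\<^sup>2) / 2"
      by (simp add: norm_mult power2_eq_square algebra_simps)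
  qed
  also have "\<dots> = 1" using sq[OF assms(1)] sq[OF assms(2)]
    by (simp add: sum_divide_distrib[symmetric] sum.distrib)
  finally show ?thesis .
qed

lemma fid_le:
  assumes "unit_state n psi" "stabilizer_state n chi"
  shows "(cmod (inner_n n chi psi))\<^sup>2 \<le> stab_fidelity n psi"
  unfolding stab_fidelity_def
proof (rule cSup_upper)
  show "(cmod (inner_n n chi psi))\<^sup>2 \<in> {(cmod (inner_n n phi psi))\<^sup>2 |phi. stabilizer_state n phi}"
    using assms by auto
  show "bdd_above {(cmod (inner_n n phi psi))\<^sup>2 |phi. stabilizer_state n phi}"
  proof (rule bdd_aboveI[where M=1], clarify)
    fix phi assume "stabilizer_state n phi"
    then have "cmod (inner_n n phi psi) \<le> 1" using inner_le1 assms(1) by (auto simp: stabilizer_state_def)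
    then show "(cmod (inner_n n phi psi))\<^sup>2 \<le> 1" by (simp add: power_le_one)
  qed
qed


lemma orth:
  assumes st: "stabilizer_state n phi" and x0: "x0 \<in> weyl_set n phi" and w: "w \<in> pts n"
    and odd: "odd (omega x0 w)"
  shows "inner_n n phi (weyl_apply w phi) = 0"
proof -
  obtain l where l: "l = 1 \<or> l = -1" "stab n phi x0 l" using ws_stab[OF x0] by blast
  have x0p: "x0 \<in> pts n" using x0 weyl_set_sub by blast
  have s1: "stab n (weyl_apply w phi) x0 (- l)"
    using stab_transport[OF x0p w l(2)] odd by simp
  define X where "X = inner_n n phi (weyl_apply w phi)"
  have "inner_n n phi (weyl_apply x0 (weyl_apply w phi)) = inner_n n (weyl_apply x0 phi) (weyl_apply w phi)"
    by (rule hermitian[OF x0p])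
  moreover have "inner_n n phi (weyl_apply x0 (weyl_apply w phi)) = - l * X"
  proof -
    have "inner_n n phi (weyl_apply x0 (weyl_apply w phi)) = inner_n n phi (\<lambda>d. - l * weyl_apply w phi d)"
      using s1 by (intro inner_cong) (auto simp: stab_def)
    then show ?thesis using inner_scale_r[of n phi "- l" "weyl_apply w phi"] by (simp add: X_def)
  qed
  moreover have "inner_n n (weyl_apply x0 phi) (weyl_apply w phi) = l * X"
  proof -
    have "inner_n n (weyl_apply x0 phi) (weyl_apply w phi) = inner_n n (\<lambda>d. l * phi d) (weyl_apply w phi)"
      using l(2) by (intro inner_cong) (auto simp: stab_def)
    then show ?thesis using l(1) by (auto simp: inner_scale_l X_def)
  qed
  ultimately have "- l * X = l * X" by simp
  then show ?thesis using l(1) by (auto simp: X_def)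
qed

lemma competitor:
  assumes st: "stabilizer_state n phi" and Hs: "f2_subspace n H" and HS: "H \<subseteq> weyl_set n phi"
    and cH: "2 * card H = 2 ^ n" and w: "w \<in> pts n" and comm: "\<forall>t\<in>H. even (omega t w)"
    and x0: "x0 \<in> weyl_set n phi" and odd: "odd (omega x0 w)" and sg: "sg = 1 \<or> sg = -1"
    and al: "al = complex_of_real (1 / sqrt 2)"
  shows "stabilizer_state n (\<lambda>d. al * phi d + (sg * al) * weyl_apply w phi d)"
proof -
  define phi1 where "phi1 = weyl_apply w phi"
  define chi where "chi = (\<lambda>d. al * phi d + (sg * al) * phi1 d)"
  have uphi: "unit_state n phi" using st by (simp add: stabilizer_state_def)
  have X: "inner_n n phi phi1 = 0" unfolding phi1_def by (rule orth[OF st x0 w odd])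
  have X': "inner_n n phi1 phi = 0" using X inner_conj[of n phi phi1] by simp
  have u1: "inner_n n phi1 phi1 = 1" using uphi by (simp add: phi1_def unitary[OF w] unit_state_def)
  have a2: "cnj al * al = 1 / 2" using al
    by (simp flip: of_real_mult)
  have sg2: "cnj sg * sg = 1" using sg by auto
  have "inner_n n chi chi = cnj al * al + (cnj sg * sg) * (cnj al * al)"
    unfolding chi_def inner_lin_l inner_lin_r
    using uphi X X' u1 by (simp add: unit_state_def algebra_simps)
  then have uchi: "unit_state n chi" using a2 sg2 by (simp add: unit_state_def)
  have HP: "H \<subseteq> pts n" using Hs by (simp add: f2_subspace_def)
  have Hchi: "t \<in> weyl_set n chi" if t: "t \<in> H" for t
  proof -
    have tS: "t \<in> weyl_set n phi" using t HS by auto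
    have tp: "t \<in> pts n" using t HP by auto
    obtain l where l: "l = 1 \<or> l = -1" "stab n phi t l" using ws_stab[OF tS] by blast
    have s1: "stab n phi1 t l" using stab_transport[OF tp w l(2)] comm t by (simp add: phi1_def)
    have "stab n chi t l" using l(2) s1
      by (simp add: stab_def chi_def weyl_lin) (simp add: algebra_simps)
    then show ?thesis using stab_ws[OF tp _ l(1)] by blast
  qed
  have wchi: "w \<in> weyl_set n chi"
  proof -
    have "stab n chi w sg"
      unfolding stab_def chi_def
    proof
      fix d assume d: "d \<in> bits n"
      have "weyl_apply w (\<lambda>d. al * phi d + sg * al * phi1 d) d = al * phi1 d + sg * al * phi d"
        by (simp add: weyl_lin phi1_def weyl_invol[OF w d])
      then show "weyl_apply w (\<lambda>d. al * phi d + sg * al * phi1 d) d = sg * (al * phi d + sg * al * phi1 d)"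
        using sg by auto
    qed
    then show ?thesis using stab_ws[OF w _ sg] by blast
  qed
  obtain d0 where d0: "d0 \<in> bits n" "chi d0 \<noteq> 0" using unit_nz[OF uchi] by blast
  define W where "W = H \<union> (\<lambda>t. padd w t) ` H"
  have WS: "W \<subseteq> weyl_set n chi"
    unfolding W_def using Hchi wchi ws_closed(1)[OF wchi _ d0] by auto
  have wnS: "w \<notin> weyl_set n phi" using ws_iso(1)[OF st x0] odd by blast
  have disj: "H \<inter> (\<lambda>t. padd w t) ` H = {}"
  proof (rule ccontr)
    assume "H \<inter> (\<lambda>t. padd w t) ` H \<noteq> {}"
    then obtain t where t: "t \<in> H" "padd w t \<in> H" by auto
    then have "padd (padd w t) t \<in> H" using Hs by (simp add: f2_subspace_def)
    moreover have "padd (padd w t) t = w" using t HP w by (intro padd_cancel) auto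
    ultimately show False using wnS HS by auto
  qed
  have inj: "inj_on (\<lambda>t. padd w t) H"
  proof (rule inj_onI)
    fix t1 t2 assume "t1 \<in> H" "t2 \<in> H" "padd w t1 = padd w t2"
    then have "padd (padd t1 w) w = padd (padd t2 w) w" by (simp add: padd_comm)
    moreover have "t1 \<in> pts n" "t2 \<in> pts n" using \<open>t1 \<in> H\<close> \<open>t2 \<in> H\<close> HP by auto
    ultimately show "t1 = t2" using w by (simp add: padd_cancel)
  qed
  have fH: "finite H" using finite_sub[OF Hs] .
  have "card W = 2 ^ n" unfolding W_def using fH disj inj cH
    by (simp add: card_Un_disjoint card_image)
  then show ?thesis using mk_stab[OF uchi WS] by (simp add: chi_def phi1_def)
qed


lemma norm_add_sq: "(cmod (a + b))\<^sup>2 = (cmod a)\<^sup>2 + (cmod b)\<^sup>2 + 2 * Re (cnj a * b)"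
  unfolding cmod_power2 by (simp add: power2_eq_square algebra_simps)

lemma norm_diff_sq: "(cmod (a - b))\<^sup>2 = (cmod a)\<^sup>2 + (cmod b)\<^sup>2 - 2 * Re (cnj a * b)"
  unfolding cmod_power2 by (simp add: power2_eq_square algebra_simps)

lemma comp_ineq:
  assumes up: "unit_state n psi" and st: "stabilizer_state n phi" and Hs: "f2_subspace n H"
    and HS: "H \<subseteq> weyl_set n phi"
    and cH: "2 * card H = 2 ^ n" and w: "w \<in> pts n" and comm: "\<forall>t\<in>H. even (omega t w)"
    and x0: "x0 \<in> weyl_set n phi" and odd: "odd (omega x0 w)"
    and Fu: "stab_fidelity n psi = (cmod (inner_n n phi psi))\<^sup>2"
  shows "2 * \<bar>Re (cnj (inner_n n phi psi) * inner_n n (weyl_apply w phi) psi)\<bar>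
     \<le> (cmod (inner_n n phi psi))\<^sup>2 - (cmod (inner_n n (weyl_apply w phi) psi))\<^sup>2"
proof -
  define al where "al = complex_of_real (1 / sqrt 2)"
  define c0 where "c0 = inner_n n phi psi"
  define c1 where "c1 = inner_n n (weyl_apply w phi) psi"
  have cal: "cnj al = al" by (simp add: al_def)
  have key: "(cmod (al * (c0 + sg * c1)))\<^sup>2 \<le> (cmod c0)\<^sup>2" if sg: "sg = 1 \<or> sg = -1" for sg
  proof -
    have "stabilizer_state n (\<lambda>d. al * phi d + (sg * al) * weyl_apply w phi d)"
      by (rule competitor[OF st Hs HS cH w comm x0 odd sg al_def])
    then have "(cmod (inner_n n (\<lambda>d. al * phi d + (sg * al) * weyl_apply w phi d) psi))\<^sup>2 \<le> (cmod c0)\<^sup>2"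
      using fid_le[OF up] Fu by (simp add: c0_def)
    moreover have "inner_n n (\<lambda>d. al * phi d + (sg * al) * weyl_apply w phi d) psi = al * (c0 + sg * c1)"
      unfolding inner_lin_l using sg by (auto simp: cal c0_def c1_def algebra_simps)
    ultimately show ?thesis by simp
  qed
  have "cmod al = 1 / sqrt 2" unfolding al_def by (simp only: norm_of_real) simp
  then have al2: "(cmod al)\<^sup>2 = 1 / 2" by (simp add: power_divide)
  have p: "(cmod (c0 + c1))\<^sup>2 \<le> 2 * (cmod c0)\<^sup>2"
    using key[of 1] al2 by (simp add: norm_mult power_mult_distrib)
  have m: "(cmod (c0 - c1))\<^sup>2 \<le> 2 * (cmod c0)\<^sup>2"
    using key[of "-1"] al2 by (simp add: norm_mult power_mult_distrib)
  show ?thesis using p m unfolding norm_add_sq norm_diff_sq c0_def[symmetric] c1_def[symmetric]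
    by (simp add: abs_if)
qed

lemma final_alg:
  fixes u v :: real
  assumes "0 \<le> v" "v \<le> u" "2 * u * v \<le> (u - v)\<^sup>2"
  shows "(2 - sqrt 3) / 2 * u ^ 4 \<le> (u + v)\<^sup>2 / 2 * ((u - v)\<^sup>2 / 2)"
proof -
  define s where "s = sqrt 3"
  have s2: "s * s = 3" by (simp add: s_def)
  have s0: "s > 1" by (simp add: s_def)
  have s1: "s < 2"
  proof (rule ccontr)
    assume "\<not> s < 2"
    then have "2 * 2 \<le> s * s" by (intro mult_mono) auto
    then show False using s2 by simp
  qed
  have vb: "v \<le> (2 - s) * u"
  proof (rule ccontr)
    assume c: "\<not> v \<le> (2 - s) * u"
    have u0: "u \<ge> 0" using assms by linarith
    have f1: "v - (2 - s) * u > 0" using c by simp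
    have f2: "v - (2 + s) * u \<le> 0 - s * u" using assms(1,2) by (simp add: algebra_simps)
    have f2': "v - (2 + s) * u < 0"
    proof (cases "u = 0")
      case True then show ?thesis using c assms by simp
    next
      case False then have "s * u > 0" using u0 s0 by simp
      then show ?thesis using f2 by linarith
    qed
    have "(v - (2 - s) * u) * (v - (2 + s) * u) < 0" using f1 f2' by (simp add: mult_pos_neg)
    moreover have "(v - (2 - s) * u) * (v - (2 + s) * u) = v * v - 4 * u * v + u * u"
    proof -
      have "(v - (2 - s) * u) * (v - (2 + s) * u) = v * v - 4 * u * v + (4 - s * s) * u * u"
        by (simp add: algebra_simps)
      also have "\<dots> = v * v - 4 * u * v + u * u" by (simp add: s2)
      finally show ?thesis .
    qed
    moreover have "(u - v)\<^sup>2 = u * u - 2 * u * v + v * v" by (simp add: power2_eq_square algebra_simps)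
    ultimately show False using assms(3) by linarith
  qed
  have u0: "u \<ge> 0" using assms by linarith
  have a: "u - v \<ge> (s - 1) * u" using vb by (simp add: algebra_simps)
  have b: "(s - 1) * u \<ge> 0" using s0 u0 by simp
  have "(u - v)\<^sup>2 \<ge> ((s - 1) * u)\<^sup>2" using a b by (simp add: power_mono)
  moreover have "((s - 1) * u)\<^sup>2 = (4 - 2 * s) * u\<^sup>2" using s2 by (simp add: power2_eq_square algebra_simps)
  ultimately have A: "(u - v)\<^sup>2 \<ge> (4 - 2 * s) * u\<^sup>2" by simp
  have B: "(u + v)\<^sup>2 \<ge> u\<^sup>2" using assms u0 by (simp add: power_mono)
  have "(4 - 2 * s) * u\<^sup>2 * u\<^sup>2 \<le> (u - v)\<^sup>2 * (u + v)\<^sup>2"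
    using A B s1 by (intro mult_mono) auto
  moreover have "(2 - s) / 2 * u ^ 4 = ((4 - 2 * s) * u\<^sup>2 * u\<^sup>2) / 4"
    by (simp add: power2_eq_square power4_eq_xxxx field_simps)
  moreover have "(u + v)\<^sup>2 / 2 * ((u - v)\<^sup>2 / 2) = ((u - v)\<^sup>2 * (u + v)\<^sup>2) / 4"
    by simp
  ultimately show ?thesis unfolding s_def[symmetric] by linarith
qed


lemma real_ee: "x \<in> pts n \<Longrightarrow> ee n f x = complex_of_real (Re (ee n f x))"
  using herm_real[of x n f] by (simp add: ee_def complex_eq_iff)

lemma main_part1:
  assumes up: "unit_state n psi" and st: "stabilizer_state n phi"
    and Fu: "(cmod (inner_n n phi psi))\<^sup>2 = stab_fidelity n psi"
    and Ts: "f2_subspace n T" and TS: "T \<subset> weyl_set n phi"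
  shows "\<exists>w x0. w \<in> pts n \<and> (\<forall>t\<in>T. even (omega t w)) \<and> x0 \<in> weyl_set n phi \<and> odd (omega x0 w)"
proof -
  define S where "S = weyl_set n phi"
  have Ss: "f2_subspace n S" unfolding S_def by (rule ws_subspace[OF st])
  have fS: "finite S" by (simp add: S_def)
  have cTS: "card T < card S" using TS fS by (simp add: S_def psubset_card_mono)
  have pT: "card T * card (perp n T) = 2 ^ n * 2 ^ n" by (rule perp_count[OF Ts])
  have pS: "card S * card (perp n S) = 2 ^ n * 2 ^ n" by (rule perp_count[OF Ss])
  have "\<not> perp n T \<subseteq> perp n S"
  proof
    assume sub: "perp n T \<subseteq> perp n S"
    have "finite (perp n S)" by (rule finite_subset[of _ "pts n"]) (auto simp: perp_def)
    then have "card (perp n T) \<le> card (perp n S)" using sub card_mono by blast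
    then have "card T * card (perp n T) \<le> card T * card (perp n S)" by simp
    moreover have "card (perp n S) > 0" using pS by (cases "card (perp n S)") auto
    then have "card T * card (perp n S) < card S * card (perp n S)" using cTS by simp
    ultimately show False using pT pS by linarith
  qed
  then obtain w where w: "w \<in> perp n T" "w \<notin> perp n S" by blast
  then obtain x0 where x0: "x0 \<in> S" "odd (omega w x0)" by (auto simp: perp_def)
  have "w \<in> pts n" "\<forall>t\<in>T. even (omega t w)" using w(1) by (auto simp: perp_def omega_comm)
  moreover have "odd (omega x0 w)" using x0(2) by (simp add: omega_comm)
  ultimately show ?thesis using x0(1) unfolding S_def by blast
qed


lemma cs_bound:
  fixes s r :: "'a \<Rightarrow> real"
  assumes "\<forall>x\<in>A. (s x)\<^sup>2 = 1"
  shows "(\<Sum>x\<in>A. s x * r x)\<^sup>2 \<le> real (card A) * (\<Sum>x\<in>A. (r x)\<^sup>2)"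
proof -
  have "(\<Sum>x\<in>A. s x * r x)\<^sup>2 \<le> (\<Sum>x\<in>A. (s x)\<^sup>2) * (\<Sum>x\<in>A. (r x)\<^sup>2)"
    by (rule Cauchy_Schwarz_ineq_sum)
  also have "(\<Sum>x\<in>A. (s x)\<^sup>2) = real (card A)" using assms by simp
  finally show ?thesis .
qed

lemma pbound:
  fixes N c R Q a :: real
  assumes N: "N > 0" and c: "c * 2 = N" and R: "R = N * a / 2" and CS: "R\<^sup>2 \<le> c * Q"
  shows "a\<^sup>2 / 2 \<le> Q / N"
proof -
  have c': "c = N / 2" using c by simp
  have "R\<^sup>2 = N * N * a\<^sup>2 / 4" unfolding R by (simp add: power2_eq_square field_simps)
  then have "N * N * a\<^sup>2 / 4 \<le> N / 2 * Q" using CS c' by simp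
  then have "N * (N * a\<^sup>2 / 2) \<le> N * Q" by (simp add: field_simps)
  then have "N * a\<^sup>2 / 2 \<le> Q" using N by (simp add: mult_le_cancel_left_pos)
  then show ?thesis using N by (simp add: field_simps)
qed


theorem lemma5p6:
  fixes n :: nat and psi phi :: "bool list \<Rightarrow> complex"
    and T :: "(bool list \<times> bool list) set"
  assumes "unit_state n psi"
    and "stabilizer_state n phi"
    and "(cmod (inner_n n phi psi))\<^sup>2 = stab_fidelity n psi"
    and "f2_subspace n T"
    and "T \<subset> weyl_set n phi"
  shows "(\<Sum>x\<in>weyl_set n phi - T. qdist n psi x)
           \<ge> (2 - sqrt 3) / 2 * stab_fidelity n psi ^ 4"
proof -
  note up = assms(1) and st = assms(2) and Fu0 = assms(3) and Ts = assms(4) and TS0 = assms(5)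
  define S where "S = weyl_set n phi"
  define u where "u = (cmod (inner_n n phi psi))\<^sup>2"
  have Fu: "stab_fidelity n psi = u" using Fu0 by (simp add: u_def)
  obtain w x0 where w: "w \<in> pts n" and wT: "\<forall>t\<in>T. even (omega t w)" and x0: "x0 \<in> S"
    and ox: "odd (omega x0 w)"
    using main_part1[OF assms] unfolding S_def by blast
  have Ss: "f2_subspace n S" unfolding S_def by (rule ws_subspace[OF st])
  have SP: "S \<subseteq> pts n" by (simp add: S_def weyl_set_sub)
  have fS: "finite S" by (simp add: S_def)
  have cS: "card S = 2 ^ n" unfolding S_def by (rule stab_key(1)[OF st])
  have iso: "even (omega x y)" if "x \<in> S" "y \<in> S" for x y using ws_iso(1)[OF st] that by (simp add: S_def)
  have clS: "padd x y \<in> S" if "x \<in> S" "y \<in> S" for x y using ws_iso(2)[OF st] that by (simp add: S_def)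
  have x0p: "x0 \<in> pts n" using x0 SP by auto
  define H where "H = {x\<in>S. even (omega x w)}"
  have HS: "H \<subseteq> S" by (auto simp: H_def)
  have HP: "H \<subseteq> pts n" using HS SP by auto
  have x0H: "x0 \<notin> H" using ox by (simp add: H_def)
  have TH: "T \<subseteq> H" using TS0 wT by (auto simp: H_def S_def)
  have Hs: "f2_subspace n H"
    unfolding f2_subspace_def
  proof (intro conjI ballI)
    show "H \<subseteq> pts n" by (rule HP)
    have "zp n \<in> S" using Ss by (simp add: f2_subspace_def zp_def)
    moreover have "omega (zp n) w = 0" by (simp add: omega_def zp_def)
    ultimately show "(replicate n False, replicate n False) \<in> H" by (simp add: H_def zp_def)
  next
    fix x y assume "x \<in> H" "y \<in> H"
    then have "x \<in> pts n" "y \<in> pts n" using HP by auto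
    then show "padd x y \<in> H" using clS even_omega_padd[of x n y w] \<open>x \<in> H\<close> \<open>y \<in> H\<close> w by (auto simp: H_def)
  qed
  have oddN: "odd (omega x w)" if "x \<in> S - H" for x using that by (auto simp: H_def)
  have bij: "bij_betw (\<lambda>h. padd h x0) H (S - H)"
  proof (rule bij_betw_byWitness[where f'="\<lambda>h. padd h x0"])
    show "\<forall>a\<in>H. padd (padd a x0) x0 = a" using HP x0p by (auto simp: padd_cancel)
    show "\<forall>a\<in>S - H. padd (padd a x0) x0 = a" using SP x0p by (auto simp: padd_cancel)
    show "(\<lambda>h. padd h x0) ` H \<subseteq> S - H"
    proof (rule image_subsetI)
      fix h assume h: "h \<in> H"
      have "h \<in> pts n" using h HP by auto
      then show "padd h x0 \<in> S - H"
        using h HS clS x0 ox even_omega_padd[of h n x0 w] w x0p by (auto simp: H_def)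
    qed
    show "(\<lambda>h. padd h x0) ` (S - H) \<subseteq> H"
    proof (rule image_subsetI)
      fix h assume h: "h \<in> S - H"
      have "h \<in> pts n" using h SP by auto
      then show "padd h x0 \<in> H"
        using h clS x0 ox even_omega_padd[of h n x0 w] w x0p by (auto simp: H_def)
    qed
  qed
  have fH: "finite H" using finite_sub[OF Hs] .
  have cH: "2 * card H = 2 ^ n"
  proof -
    have "card (S - H) = card H" using bij_betw_same_card[OF bij] by simp
    moreover have "card (S - H) = card S - card H" using HS fH by (simp add: card_Diff_subset)
    moreover have "card H \<le> card S" using HS fS by (simp add: card_mono)
    ultimately show ?thesis using cS by linarith
  qed
  define phi1 where "phi1 = weyl_apply w phi"
  have uphi: "unit_state n phi" using st by (simp add: stabilizer_state_def)
  have eeS: "stab n phi x (ee n phi x) \<and> (ee n phi x = 1 \<or> ee n phi x = -1)" if "x \<in> S" for x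
  proof -
    have "x \<in> weyl_set n phi" using that by (simp add: S_def)
    then obtain l where l: "l = 1 \<or> l = -1" "stab n phi x l" using ws_stab[of x n phi] by blast
    then show ?thesis using stab_ee[OF l(2) uphi] by simp
  qed
  have tr: "stab n phi1 x ((-1) ^ omega x w * ee n phi x)" if "x \<in> S" for x
    unfolding phi1_def using that SP eeS[OF that] by (intro stab_transport[OF _ w]) auto
  have u1: "unit_state n phi1" using uphi by (simp add: phi1_def unit_state_def unitary[OF w])
  have S1: "S \<subseteq> weyl_set n phi1"
  proof
    fix x assume x: "x \<in> S"
    have "(-1) ^ omega x w * ee n phi x = 1 \<or> (-1) ^ omega x w * ee n phi x = -1"
      using eeS[OF x] m1_cases[of "omega x w"] by auto
    then show "x \<in> weyl_set n phi1" using stab_ws[OF _ tr[OF x]] x SP by auto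
  qed
  have st1: "stabilizer_state n phi1" by (rule mk_stab[OF u1 S1 cS])
  have WS1: "weyl_set n phi1 = S"
    using card_subset_eq[OF finite_weyl_set S1] stab_key(1)[OF st1] cS by simp
  have ee1: "ee n phi1 x = (-1) ^ omega x w * ee n phi x" if "x \<in> S" for x
    by (rule stab_ee[OF tr[OF that] u1])
  define v where "v = (cmod (inner_n n phi1 psi))\<^sup>2"
  define f where "f x = ee n phi x * ee n psi x" for x
  have Id1: "(\<Sum>x\<in>S. f x) = 2 ^ n * complex_of_real u"
    using fid_identity[OF st, of psi] by (simp add: S_def f_def u_def)
  have Id2: "(\<Sum>x\<in>S. (-1) ^ omega x w * f x) = 2 ^ n * complex_of_real v"
  proof -
    have "(\<Sum>x\<in>S. (-1) ^ omega x w * f x) = (\<Sum>x\<in>weyl_set n phi1. ee n phi1 x * ee n psi x)"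
      unfolding WS1 by (intro sum.cong refl) (simp add: ee1 f_def)
    then show ?thesis using fid_identity[OF st1, of psi] by (simp add: v_def)
  qed
  have split: "(\<Sum>x\<in>S. g x) = (\<Sum>x\<in>H. g x) + (\<Sum>x\<in>S - H. g x)" for g :: "_ \<Rightarrow> complex"
    using sum.subset_diff[OF HS fS, of g] by simp
  have AH: "(\<Sum>x\<in>H. f x) + (\<Sum>x\<in>S - H. f x) = 2 ^ n * complex_of_real u"
    using Id1 split by simp
  have "(\<Sum>x\<in>S. (-1) ^ omega x w * f x) = (\<Sum>x\<in>H. f x) - (\<Sum>x\<in>S - H. f x)"
  proof -
    have "(\<Sum>x\<in>H. (-1) ^ omega x w * f x) = (\<Sum>x\<in>H. f x)"
      by (intro sum.cong refl) (simp add: H_def)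
    moreover have "(\<Sum>x\<in>S - H. (-1) ^ omega x w * f x) = - (\<Sum>x\<in>S - H. f x)"
      unfolding sum_negf[symmetric] by (intro sum.cong refl) (simp add: oddN)
    ultimately show ?thesis using split[of "\<lambda>x. (-1) ^ omega x w * f x"] by simp
  qed
  then have AN: "(\<Sum>x\<in>H. f x) - (\<Sum>x\<in>S - H. f x) = 2 ^ n * complex_of_real v" using Id2 by simp
  define sr where "sr x = Re (ee n phi x)" for x
  define rr where "rr x = Re (ee n psi x)" for x
  have fr: "f x = complex_of_real (sr x * rr x)" if "x \<in> S" for x
    using real_ee[of x n phi] real_ee[of x n psi] that SP by (auto simp: f_def sr_def rr_def)
  define RH where "RH = (\<Sum>x\<in>H. sr x * rr x)"
  define RN where "RN = (\<Sum>x\<in>S - H. sr x * rr x)"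
  have "(\<Sum>x\<in>H. f x) = complex_of_real RH" unfolding RH_def of_real_sum
    using HS by (intro sum.cong refl) (auto simp: fr)
  moreover have "(\<Sum>x\<in>S - H. f x) = complex_of_real RN" unfolding RN_def of_real_sum
    by (intro sum.cong refl) (auto simp: fr)
  ultimately have "complex_of_real (RH + RN) = complex_of_real (2 ^ n * u)"
    and "complex_of_real (RH - RN) = complex_of_real (2 ^ n * v)" using AH AN by simp_all
  then have E1: "RH + RN = 2 ^ n * u" and E2: "RH - RN = 2 ^ n * v" by (simp_all only: of_real_eq_iff)
  have RHv: "RH = 2 ^ n * (u + v) / 2" using E1 E2 by (simp add: field_simps)
  have RNv: "RN = 2 ^ n * (u - v) / 2" using E1 E2 by (simp add: field_simps)
  have pd: "pdist n psi x = (rr x)\<^sup>2 / 2 ^ n" if "x \<in> S" for x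
  proof -
    have "cmod (ee n psi x) = \<bar>rr x\<bar>" using real_ee[of x n psi] that SP unfolding rr_def
      by (metis norm_of_real subsetD)
    then show ?thesis by (simp add: pdist_def ee_def)
  qed
  have sr1: "\<forall>x\<in>A. (sr x)\<^sup>2 = 1" if "A \<subseteq> S" for A
  proof
    fix x assume "x \<in> A"
    then have "ee n phi x = 1 \<or> ee n phi x = -1" using eeS that by blast
    then show "(sr x)\<^sup>2 = 1" by (auto simp: sr_def)
  qed
  have cHr: "real (card H) * 2 = 2 ^ n" using cH by (metis mult.commute of_nat_mult of_nat_numeral of_nat_power)
  have cNr: "real (card (S - H)) * 2 = 2 ^ n" using cH bij_betw_same_card[OF bij]
    by (metis mult.commute of_nat_mult of_nat_numeral of_nat_power)
  define PH where "PH = (\<Sum>x\<in>H. pdist n psi x)"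
  define PN where "PN = (\<Sum>x\<in>S - H. pdist n psi x)"
  have PHe: "PH = (\<Sum>x\<in>H. (rr x)\<^sup>2) / 2 ^ n"
    unfolding PH_def sum_divide_distrib using HS by (intro sum.cong refl) (auto simp: pd)
  have PNe: "PN = (\<Sum>x\<in>S - H. (rr x)\<^sup>2) / 2 ^ n"
    unfolding PN_def sum_divide_distrib by (intro sum.cong refl) (auto simp: pd)
  have PHb: "(u + v)\<^sup>2 / 2 \<le> PH" unfolding PHe
    by (rule pbound[OF _ cHr RHv]) (use cs_bound[OF sr1[OF HS], of rr] in \<open>simp_all add: RH_def\<close>)
  have PNb: "(u - v)\<^sup>2 / 2 \<le> PN" unfolding PNe
    by (rule pbound[OF _ cNr RNv]) (use cs_bound[OF sr1[of "S - H"], of rr] in \<open>simp_all add: RN_def\<close>)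
  have HS': "H \<subseteq> weyl_set n phi" using HS by (simp add: S_def)
  have x0S': "x0 \<in> weyl_set n phi" using x0 by (simp add: S_def)
  have commH: "\<forall>t\<in>H. even (omega t w)" by (simp add: H_def)
  define c0 where "c0 = inner_n n phi psi"
  define c1 where "c1 = inner_n n phi1 psi"
  define z where "z = cnj c0 * c1"
  have ci1: "2 * \<bar>Re z\<bar> \<le> u - v"
    using comp_ineq[OF up st Hs HS' cH w commH x0S' ox Fu[unfolded u_def]]
    by (simp add: z_def c0_def c1_def phi1_def u_def v_def)
  define w2 where "w2 = padd w x0"
  have w2p: "w2 \<in> pts n" using w x0p by (simp add: w2_def padd_pts)
  have comm2: "\<forall>t\<in>H. even (omega t w2)"
  proof
    fix t assume t: "t \<in> H"
    then have "t \<in> S" "t \<in> pts n" using HS HP by auto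
    then show "even (omega t w2)" using even_omega_padd2[OF w x0p, of t] iso[of t x0] x0 t
      by (simp add: w2_def H_def)
  qed
  have ox2: "odd (omega x0 w2)" using even_omega_padd2[OF w x0p x0p] iso[OF x0 x0] ox by (simp add: w2_def)
  have ci2: "2 * \<bar>Re (cnj c0 * inner_n n (weyl_apply w2 phi) psi)\<bar>
      \<le> u - (cmod (inner_n n (weyl_apply w2 phi) psi))\<^sup>2"
    using comp_ineq[OF up st Hs HS' cH w2p comm2 x0S' ox2 Fu[unfolded u_def]]
    by (simp add: c0_def u_def)
  define l0 where "l0 = ee n phi x0"
  have l0: "stab n phi x0 l0" "l0 = 1 \<or> l0 = -1" using eeS[OF x0] by (simp_all add: l0_def)
  have ccsq: "(cc w x0)\<^sup>2 = -1" using cc_sq[OF w x0p] ox by (simp add: omega_comm)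
  then have ccnz: "cc w x0 \<noteq> 0" by auto
  define mu where "mu = l0 / cc w x0"
  have mu2: "mu\<^sup>2 = -1" using l0(2) ccsq by (auto simp: mu_def power_divide)
  have mui: "mu = \<i> \<or> mu = - \<i>"
  proof -
    have "mu\<^sup>2 = \<i>\<^sup>2" using mu2 by simp
    then show ?thesis using power2_eq_iff[of mu "\<i>"] by blast
  qed
  have W2: "weyl_apply w2 phi d = mu * phi1 d" if d: "d \<in> bits n" for d
  proof -
    have "weyl_apply w (weyl_apply x0 phi) d = weyl_apply w (\<lambda>e. l0 * phi e) d"
      using l0(1) by (intro weyl_cong[OF w d]) (auto simp: stab_def)
    also have "\<dots> = l0 * phi1 d" by (simp add: weyl_scale phi1_def)
    finally have "cc w x0 * weyl_apply w2 phi d = l0 * phi1 d"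
      using weyl_mult[OF w x0p d, of phi] by (simp add: w2_def)
    then show ?thesis using ccnz by (simp add: mu_def field_simps)
  qed
  have c2: "inner_n n (weyl_apply w2 phi) psi = cnj mu * c1"
  proof -
    have "inner_n n (weyl_apply w2 phi) psi = inner_n n (\<lambda>d. mu * phi1 d) psi"
      by (intro inner_cong) (auto simp: W2)
    then show ?thesis by (simp add: inner_scale_l c1_def)
  qed
  have ci2': "2 * \<bar>Im z\<bar> \<le> u - v"
  proof -
    have "cmod (cnj mu * c1) = cmod c1" using mui by (auto simp: norm_mult)
    moreover have "\<bar>Re (cnj c0 * (cnj mu * c1))\<bar> = \<bar>Im z\<bar>" using mui by (auto simp: z_def)
    ultimately show ?thesis using ci2 c2 by (simp add: v_def c1_def)
  qed
  have zz: "(Re z)\<^sup>2 + (Im z)\<^sup>2 = u * v"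
  proof -
    have "(Re z)\<^sup>2 + (Im z)\<^sup>2 = (cmod z)\<^sup>2" by (simp add: cmod_power2)
    also have "\<dots> = u * v" by (simp add: z_def norm_mult u_def v_def c0_def c1_def power_mult_distrib)
    finally show ?thesis .
  qed
  have v0: "0 \<le> v" by (simp add: v_def)
  have vu: "v \<le> u" using ci1 by linarith
  have "(2 * Re z)\<^sup>2 \<le> (u - v)\<^sup>2"
    using ci1 power_mono[of "\<bar>2 * Re z\<bar>" "u - v" 2] by (simp add: power2_abs)
  moreover have "(2 * Im z)\<^sup>2 \<le> (u - v)\<^sup>2"
    using ci2' power_mono[of "\<bar>2 * Im z\<bar>" "u - v" 2] by (simp add: power2_abs)
  ultimately have uv: "2 * u * v \<le> (u - v)\<^sup>2" using zz by (simp add: power_mult_distrib)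
  have fin: "(2 - sqrt 3) / 2 * u ^ 4 \<le> (u + v)\<^sup>2 / 2 * ((u - v)\<^sup>2 / 2)"
    by (rule final_alg[OF v0 vu uv])
  have pnn: "0 \<le> pdist n psi x" for x by (simp add: pdist_def)
  have qnn: "0 \<le> qdist n psi x" for x by (simp add: qdist_def sum_nonneg pnn)
  have A1: "PH * PN \<le> (\<Sum>x\<in>S - T. qdist n psi x)"
  proof -
    have "PH * PN = (\<Sum>y\<in>H. pdist n psi y * (\<Sum>x\<in>S - H. pdist n psi (padd x y)))"
      unfolding PH_def PN_def sum_distrib_right
    proof (intro sum.cong refl)
      fix y assume y: "y \<in> H"
      have "(\<Sum>x\<in>S - H. pdist n psi (padd x y)) = (\<Sum>x\<in>S - H. pdist n psi x)"
      proof -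
        have mem: "padd x y \<in> S - H \<and> padd (padd x y) y = x" if x: "x \<in> S - H" for x
        proof -
          have xp: "x \<in> pts n" "y \<in> pts n" using x y SP HP by auto
          show ?thesis using padd_cancel[OF xp] x y HS clS even_omega_padd[OF xp w] by (auto simp: H_def)
        qed
        show ?thesis
          by (rule sum.reindex_bij_witness[where i="\<lambda>x. padd x y" and j="\<lambda>x. padd x y"])
             (use mem in blast)+
      qed
      then show "pdist n psi y * (\<Sum>x\<in>S - H. pdist n psi x) = pdist n psi y * (\<Sum>x\<in>S - H. pdist n psi (padd x y))"
        by simp
    qed
    also have "\<dots> = (\<Sum>x\<in>S - H. \<Sum>y\<in>H. pdist n psi y * pdist n psi (padd x y))"
      by (simp add: sum_distrib_left sum.swap[of _ H])
    also have "\<dots> \<le> (\<Sum>x\<in>S - H. qdist n psi x)"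
      unfolding qdist_def
      by (intro sum_mono sum_mono2) (use HP in \<open>auto simp: pnn\<close>)
    also have "\<dots> \<le> (\<Sum>x\<in>S - T. qdist n psi x)"
      using TH fS by (intro sum_mono2) (auto simp: qnn)
    finally show ?thesis .
  qed
  have A2: "(u + v)\<^sup>2 / 2 * ((u - v)\<^sup>2 / 2) \<le> PH * PN"
  proof -
    have "0 \<le> PH" using PHb zero_le_power2[of "u + v"] by linarith
    moreover have "0 \<le> (u - v)\<^sup>2 / 2" by simp
    ultimately show ?thesis using PHb PNb by (intro mult_mono) auto
  qed
  show ?thesis unfolding Fu S_def[symmetric] using order_trans[OF fin order_trans[OF A2 A1]] .
qed

end
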